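(* Let $(U,\mathcal{I})$ be a laminar matroid, $f:2^U\to\mathbb{R}_{\ge0}$ non-negative, monotonically non-decreasing and submodular, $p\in(0,1)$, and let $M,N$ and $w$ be as produced by $\mathrm{SIMULATE}$ (see context). Then $$\mathbb{E}[f(M)]=\mathbb{E}[w(M)]=\frac{p}{1-p}\,\mathbb{E}[w(N)]\ge\frac p2\cdot\mathrm{OPT},$$ where $\mathrm{OPT}=\max_{T\in\mathcal{I}}f(T)$.
   Context: Laminar matroid: a laminar family $\mathcal{F}$ of subsets of $U$ (any two members disjoint or nested) with integer capacities $\mu(B)$, and $\mathcal{I}=\{T\subseteq U:|T\cap B|\le\mu(B)\ \forall B\in\mathcal{F}\}$. Write $f_T(e)=f(T\cup\{e\})-f(T)$. $\mathrm{SIMULATE}$: each element of $U$ is independently put into a set $H$ with probability $p$. Start with $M=N=\emptyset$. While there exists $e\in U\setminus(M\cup N)$ with $M\cup\{e\}\in\mathcal{I}$, take such an $e$ maximizing $f_M(e)$ (ties broken by a fixed rule); let $M_e$ denote the current $M$ at that moment; if $e\in H$ add $e$ to $M$, otherwise to $N$. Define $w(e)=f_{M_e}(e)$ for $e\in M\cup N$ and $w(e)=0$ for $e\notin M\cup N$, and $w(T)=\sum_{e\in T}w(e)$. *)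

theory Defs
  imports Complex_Main
begin

definition laminar :: "'a set \<Rightarrow> 'a set set \<Rightarrow> bool" where
  "laminar U F \<longleftrightarrow> (\<forall>B\<in>F. B \<subseteq> U) \<and>
     (\<forall>A\<in>F. \<forall>B\<in>F. A \<inter> B = {} \<or> A \<subseteq> B \<or> B \<subseteq> A)"

definition lam_indep :: "'a set \<Rightarrow> 'a set set \<Rightarrow> ('a set \<Rightarrow> nat) \<Rightarrow> 'a set \<Rightarrow> bool" where
  "lam_indep U F mu T \<longleftrightarrow> T \<subseteq> U \<and> (\<forall>B\<in>F. card (T \<inter> B) \<le> mu B)"

definition monotone_fun :: "'a set \<Rightarrow> ('a set \<Rightarrow> real) \<Rightarrow> bool" where
  "monotone_fun U f \<longleftrightarrow> (\<forall>A B. A \<subseteq> B \<and> B \<subseteq> U \<longrightarrow> f A \<le> f B)"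

definition submodular :: "'a set \<Rightarrow> ('a set \<Rightarrow> real) \<Rightarrow> bool" where
  "submodular U f \<longleftrightarrow> (\<forall>A B. A \<subseteq> U \<and> B \<subseteq> U \<longrightarrow> f (A \<union> B) + f (A \<inter> B) \<le> f A + f B)"

definition marg :: "('a set \<Rightarrow> real) \<Rightarrow> 'a set \<Rightarrow> 'a \<Rightarrow> real" where
  "marg f T e = f (insert e T) - f T"

definition avail :: "'a set \<Rightarrow> ('a set \<Rightarrow> bool) \<Rightarrow> 'a set \<Rightarrow> 'a set \<Rightarrow> 'a set" where
  "avail U I M N = {e \<in> U - (M \<union> N). I (insert e M)}"

definition best :: "'a set \<Rightarrow> ('a set \<Rightarrow> bool) \<Rightarrow> ('a set \<Rightarrow> real) \<Rightarrow> 'a set \<Rightarrow> 'a set \<Rightarrow> 'a set" where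
  "best U I f M N = {e \<in> avail U I M N. \<forall>e'\<in>avail U I M N. marg f M e' \<le> marg f M e}"

(* One iteration of the while loop;
   sel is the fixed tie-breaking rule: given the current M, N and the set of
   maximisers it picks one of them. H is the random coin set. *)
definition sim_step ::
  "'a set \<Rightarrow> ('a set \<Rightarrow> bool) \<Rightarrow> ('a set \<Rightarrow> real) \<Rightarrow> ('a set \<Rightarrow> 'a set \<Rightarrow> 'a set \<Rightarrow> 'a)
   \<Rightarrow> 'a set \<Rightarrow> 'a set \<times> 'a set \<times> ('a \<Rightarrow> real) \<Rightarrow> 'a set \<times> 'a set \<times> ('a \<Rightarrow> real)" where
  "sim_step U I f sel H st = (case st of (M, N, w) \<Rightarrow>
     (if avail U I M N = {} then (M, N, w)
      else (let e = sel M N (best U I f M N) in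
            if e \<in> H then (insert e M, N, w(e := marg f M e))
            else (M, insert e N, w(e := marg f M e)))))"

(* Outcome of SIMULATE for coin set H: each non-terminal iteration adds a new
   element of U to M \<union> N, so card U iterations run the loop to completion. *)
definition simulate ::
  "'a set \<Rightarrow> ('a set \<Rightarrow> bool) \<Rightarrow> ('a set \<Rightarrow> real) \<Rightarrow> ('a set \<Rightarrow> 'a set \<Rightarrow> 'a set \<Rightarrow> 'a)
   \<Rightarrow> 'a set \<Rightarrow> 'a set \<times> 'a set \<times> ('a \<Rightarrow> real)" where
  "simulate U I f sel H = (sim_step U I f sel H ^^ card U) ({}, {}, (\<lambda>_. 0))"

definition sim_M where "sim_M U I f sel H = fst (simulate U I f sel H)"
definition sim_N where "sim_N U I f sel H = fst (snd (simulate U I f sel H))"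
definition sim_w where "sim_w U I f sel H = snd (snd (simulate U I f sel H))"

(* Expectation over H, each element of U independently in H with probability p. *)
definition expect :: "'a set \<Rightarrow> real \<Rightarrow> ('a set \<Rightarrow> real) \<Rightarrow> real" where
  "expect U p g = (\<Sum>H\<in>Pow U. p ^ card H * (1 - p) ^ (card U - card H) * g H)"

end

theory Submission imports Defs begin

lemma pow_split: assumes "finite U" "e \<in> U"
  shows "(\<Sum>H\<in>Pow U. g H) = (\<Sum>H\<in>Pow (U - {e}). g H + g (insert e H))"
proof -
  have U: "U = insert e (U - {e})" using assms by auto
  have P: "Pow U = Pow (U - {e}) \<union> insert e ` Pow (U - {e})"
    by (subst U, rule Pow_insert)
  have fin: "finite (Pow (U - {e}))" using assms by auto
  have disj: "Pow (U - {e}) \<inter> insert e ` Pow (U - {e}) = {}" by auto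
  have inj: "inj_on (insert e) (Pow (U - {e}))" unfolding inj_on_def by auto
  have "(\<Sum>H\<in>Pow U. g H) = (\<Sum>H\<in>Pow (U - {e}). g H) + (\<Sum>H\<in>insert e ` Pow (U - {e}). g H)"
    unfolding P using fin disj by (intro sum.union_disjoint) auto
  also have "(\<Sum>H\<in>insert e ` Pow (U - {e}). g H) = (\<Sum>H\<in>Pow (U - {e}). g (insert e H))"
    using sum.reindex[OF inj] by simp
  finally show ?thesis by (simp add: sum.distrib)
qed

lemma wt_sum: "finite U \<Longrightarrow> (\<Sum>H\<in>Pow U. (p::real) ^ card H * (1 - p) ^ (card U - card H)) = 1"
proof (induction U rule: finite_induct)
  case empty then show ?case by simp
next
  case (insert x U)
  have "(\<Sum>H\<in>Pow (insert x U). p ^ card H * (1 - p) ^ (card (insert x U) - card H))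
     = (\<Sum>H\<in>Pow U. p ^ card H * (1 - p) ^ (card (insert x U) - card H)
            + p ^ card (insert x H) * (1 - p) ^ (card (insert x U) - card (insert x H)))"
    using pow_split[of "insert x U" x] insert by simp
  also have "\<dots> = (\<Sum>H\<in>Pow U. p ^ card H * (1 - p) ^ (card U - card H))"
  proof (rule sum.cong)
    fix H assume H: "H \<in> Pow U"
    then have fH: "finite H" "x \<notin> H" "card H \<le> card U" using insert finite_subset card_mono by auto
    have c: "card (insert x U) = Suc (card U)" "card (insert x H) = Suc (card H)" using fH insert by auto
    have "Suc (card U) - card H = Suc (card U - card H)" using fH by auto
    then show "p ^ card H * (1 - p) ^ (card (insert x U) - card H)
            + p ^ card (insert x H) * (1 - p) ^ (card (insert x U) - card (insert x H))
          = p ^ card H * (1 - p) ^ (card U - card H)" unfolding c by (simp add: algebra_simps)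
  qed simp
  finally show ?case using insert by simp
qed

locale sim =
  fixes U :: "'a set" and I :: "'a set \<Rightarrow> bool" and f :: "'a set \<Rightarrow> real"
    and sel :: "'a set \<Rightarrow> 'a set \<Rightarrow> 'a set \<Rightarrow> 'a"
  assumes finU: "finite U"
    and I_sub: "I T \<Longrightarrow> T \<subseteq> U"
    and I_empty: "I {}"
    and I_down: "I T \<Longrightarrow> S \<subseteq> T \<Longrightarrow> I S"
    and I_aug: "I X \<Longrightarrow> I Y \<Longrightarrow> (\<forall>y\<in>Y. y \<notin> X \<and> \<not> I (insert y X)) \<Longrightarrow> card Y \<le> card X"
    and mono: "monotone_fun U f"
    and submod: "submodular U f"
    and f0: "f {} = 0"
    and selP: "\<forall>M N C. C \<noteq> {} \<longrightarrow> sel M N C \<in> C"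
begin

lemma marg_nonneg: "A \<subseteq> U \<Longrightarrow> z \<in> U \<Longrightarrow> 0 \<le> marg f A z"
  using mono unfolding monotone_fun_def marg_def by (metis diff_ge_0_iff_ge insert_subset subset_insertI)

lemma marg_decr: assumes "A \<subseteq> B" "B \<subseteq> U" "z \<in> U" shows "marg f B z \<le> marg f A z"
proof (cases "z \<in> B")
  case True
  then have "marg f B z = 0" by (simp add: marg_def insert_absorb)
  then show ?thesis using marg_nonneg assms by auto
next
  case False
  have "f (insert z A \<union> B) + f (insert z A \<inter> B) \<le> f (insert z A) + f B"
  proof -
    have "insert z A \<subseteq> U" using assms by auto
    then show ?thesis using submod assms(2) unfolding submodular_def by blast
  qed
  moreover have "insert z A \<union> B = insert z B" using assms by auto
  moreover have "insert z A \<inter> B = A" using assms False by auto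
  ultimately show ?thesis unfolding marg_def by simp
qed

lemma submod_sum: assumes "A \<subseteq> U" "B \<subseteq> U"
  shows "f (A \<union> B) \<le> f A + (\<Sum>b\<in>B - A. marg f A b)"
proof -
  have "finite B" using assms finU finite_subset by blast
  then show ?thesis using assms(2)
  proof (induction B rule: finite_induct)
    case empty then show ?case by simp
  next
    case (insert b B)
    show ?case
    proof (cases "b \<in> A")
      case True
      then have "A \<union> insert b B = A \<union> B" "insert b B - A = B - A" by auto
      then show ?thesis using insert by auto
    next
      case False
      have fin: "finite (B - A)" using insert by auto
      have "f (A \<union> insert b B) = f (A \<union> B) + marg f (A \<union> B) b"
        by (simp add: marg_def)
      also have "marg f (A \<union> B) b \<le> marg f A b"
        using marg_decr insert assms by auto
      also have "insert b B - A = insert b (B - A)" using False by auto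
      then have "(\<Sum>x\<in>insert b B - A. marg f A x) = marg f A b + (\<Sum>x\<in>B - A. marg f A x)"
        using fin insert by simp
      ultimately show ?thesis using insert by auto
    qed
  qed
qed

lemma sum_upd_out: "x \<notin> M \<Longrightarrow> sum (w(x := v)) M = sum w M"
  by (rule sum.cong) auto

lemma avail_sub: "avail U I M N \<subseteq> U" by (auto simp: avail_def)

lemma step_cases:
  obtains (stop) "avail U I M N = {}" "sim_step U I f sel H (M,N,w) = (M,N,w)"
  | (goM) x where "x \<in> avail U I M N" "\<forall>z\<in>avail U I M N. marg f M z \<le> marg f M x"
      "x \<in> H" "sim_step U I f sel H (M,N,w) = (insert x M, N, w(x := marg f M x))"
  | (goN) x where "x \<in> avail U I M N" "\<forall>z\<in>avail U I M N. marg f M z \<le> marg f M x"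
      "x \<notin> H" "sim_step U I f sel H (M,N,w) = (M, insert x N, w(x := marg f M x))"
proof (cases "avail U I M N = {}")
  case True
  then show ?thesis using stop by (simp add: sim_step_def)
next
  case False
  let ?A = "avail U I M N"
  have fin: "finite ?A" using finU avail_sub finite_subset by blast
  have "Max (marg f M ` ?A) \<in> marg f M ` ?A" using fin False by (intro Max_in) auto
  then obtain y where y0: "y \<in> ?A" "marg f M y = Max (marg f M ` ?A)" by auto
  have y: "y \<in> ?A" "\<forall>z\<in>?A. marg f M z \<le> marg f M y"
    using y0 fin by auto
  then have ne: "best U I f M N \<noteq> {}" unfolding best_def by blast
  define x where "x = sel M N (best U I f M N)"
  have xb: "x \<in> best U I f M N" using selP ne x_def by blast
  then have x1: "x \<in> ?A" "\<forall>z\<in>?A. marg f M z \<le> marg f M x" unfolding best_def by auto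
  have eq: "sim_step U I f sel H (M,N,w) = (if x \<in> H then (insert x M, N, w(x := marg f M x))
     else (M, insert x N, w(x := marg f M x)))"
    unfolding sim_step_def Let_def x_def using False by simp
  show ?thesis
  proof (cases "x \<in> H")
    case True
    then show ?thesis using goM[OF x1] eq by simp
  next
    case F: False
    then show ?thesis using goN[OF x1] eq by simp
  qed
qed

definition st where "st H k = (sim_step U I f sel H ^^ k) ({}, {}, (\<lambda>_. 0))"

lemma st_Suc: "st H (Suc k) = sim_step U I f sel H (st H k)"
  by (simp add: st_def)

lemma st_0: "st H 0 = ({}, {}, (\<lambda>_. 0))" by (simp add: st_def)


definition good where
  "good H M N w \<longleftrightarrow> M \<subseteq> U \<and> N \<subseteq> U \<and> M \<inter> N = {} \<and> M \<subseteq> H \<and> N \<inter> H = {} \<and> I M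
     \<and> f M = sum w M \<and> (\<forall>z\<in>M \<union> N. 0 \<le> w z) \<and> (\<forall>z\<in>N. marg f M z \<le> w z)
     \<and> (\<forall>m\<in>M. \<forall>z\<in>avail U I M N. marg f M z \<le> w m)"

lemma good_0: "good H {} {} (\<lambda>_. 0)"
  by (auto simp: good_def I_empty f0)

lemma good_step: assumes "good H M N w" "sim_step U I f sel H (M,N,w) = (M',N',w')"
  shows "good H M' N' w'"
proof (cases rule: step_cases[of M N H w])
  case stop then show ?thesis using assms by simp
next
  case (goM x)
  have e: "M' = insert x M" "N' = N" "w' = w(x := marg f M x)" using goM assms by auto
  have xU: "x \<in> U" "x \<notin> M" "x \<notin> N" "I (insert x M)" using goM(1) by (auto simp: avail_def)
  have g: "M \<subseteq> U" "N \<subseteq> U" "M \<inter> N = {}" "M \<subseteq> H" "N \<inter> H = {}" "I M" "f M = sum w M"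
     "\<forall>z\<in>M \<union> N. 0 \<le> w z" "\<forall>z\<in>N. marg f M z \<le> w z"
     "\<forall>m\<in>M. \<forall>z\<in>avail U I M N. marg f M z \<le> w m" using assms(1) by (auto simp: good_def)
  have finM: "finite M" using g(1) finU finite_subset by blast
  have av: "avail U I (insert x M) N \<subseteq> avail U I M N"
    unfolding avail_def using I_down by blast
  have "sum w' M' = marg f M x + sum w M"
  proof -
    have "sum w' M = sum w M" unfolding e(3) using xU(2) by (rule sum_upd_out)
    then show ?thesis using e xU finM by simp
  qed
  also have "\<dots> = f M'" using g(7) e by (simp add: marg_def)
  finally have fM: "f M' = sum w' M'" ..
  have nn: "0 \<le> marg f M x" using marg_nonneg g xU by auto
  have "\<forall>z\<in>N'. marg f M' z \<le> w' z"
  proof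
    fix z assume "z \<in> N'"
    then have "z \<in> N" "z \<noteq> x" using e xU by auto
    then show "marg f M' z \<le> w' z" using marg_decr[of M M' z] g e xU by fastforce
  qed
  moreover have "\<forall>m\<in>M'. \<forall>z\<in>avail U I M' N'. marg f M' z \<le> w' m"
  proof (intro ballI)
    fix m z assume m: "m \<in> M'" and z: "z \<in> avail U I M' N'"
    then have z': "z \<in> avail U I M N" "z \<in> U" using av e by (auto simp: avail_def)
    have "marg f M' z \<le> marg f M z" using marg_decr[of M M' z] g e xU z' by auto
    also have "\<dots> \<le> marg f M x" using goM z' by auto
    also have "\<dots> \<le> w' m"
    proof (cases "m = x")
      case True then show ?thesis using e by simp
    next
      case False then have "m \<in> M" using m e by auto
      then show ?thesis using g(10) goM(1) e False by auto
    qed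
    finally show "marg f M' z \<le> w' m" .
  qed
  ultimately show ?thesis unfolding good_def using g e xU goM fM nn by auto
next
  case (goN x)
  have e: "M' = M" "N' = insert x N" "w' = w(x := marg f M x)" using goN assms by auto
  have xU: "x \<in> U" "x \<notin> M" "x \<notin> N" "I (insert x M)" using goN(1) by (auto simp: avail_def)
  have g: "M \<subseteq> U" "N \<subseteq> U" "M \<inter> N = {}" "M \<subseteq> H" "N \<inter> H = {}" "I M" "f M = sum w M"
     "\<forall>z\<in>M \<union> N. 0 \<le> w z" "\<forall>z\<in>N. marg f M z \<le> w z"
     "\<forall>m\<in>M. \<forall>z\<in>avail U I M N. marg f M z \<le> w m" using assms(1) by (auto simp: good_def)
  have av: "avail U I M (insert x N) \<subseteq> avail U I M N"
    unfolding avail_def by blast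
  have nn: "0 \<le> marg f M x" using marg_nonneg g xU by auto
  have "sum w' M' = sum w M" unfolding e using xU(2) by (rule sum_upd_out)
  then have fM: "f M' = sum w' M'" using g e by simp
  have "\<forall>m\<in>M'. \<forall>z\<in>avail U I M' N'. marg f M' z \<le> w' m"
    using g(10) av e xU by fastforce
  then show ?thesis unfolding good_def using g e xU goN fM nn by auto
qed

lemma good_st: "st H k = (M,N,w) \<Longrightarrow> good H M N w"
proof (induction k arbitrary: M N w)
  case 0 then show ?case using good_0 by (simp add: st_0)
next
  case (Suc k)
  obtain M0 N0 w0 where s: "st H k = (M0,N0,w0)" by (cases "st H k") auto
  show ?case using good_step[OF Suc.IH[OF s]] Suc.prems s st_Suc by simp
qed



lemma step_mono: assumes "sim_step U I f sel H (M,N,w) = (M',N',w')"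
  shows "M \<subseteq> M'" "N \<subseteq> N'" "\<forall>z\<in>M \<union> N. w' z = w z"
proof -
  have "M \<subseteq> M' \<and> N \<subseteq> N' \<and> (\<forall>z\<in>M \<union> N. w' z = w z)"
  proof (cases rule: step_cases[of M N H w])
    case stop then show ?thesis using assms by simp
  next
    case (goM x) then show ?thesis using assms by (auto simp: avail_def)
  next
    case (goN x) then show ?thesis using assms by (auto simp: avail_def)
  qed
  then show "M \<subseteq> M'" "N \<subseteq> N'" "\<forall>z\<in>M \<union> N. w' z = w z" by auto
qed

lemma st_term_aux: "st H k = (M,N,w) \<Longrightarrow> avail U I M N = {} \<or> card (M \<union> N) = k"
proof (induction k arbitrary: M N w)
  case 0 then show ?case by (simp add: st_0)
next
  case (Suc k)
  obtain M0 N0 w0 where s: "st H k = (M0,N0,w0)" by (cases "st H k") auto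
  have st': "sim_step U I f sel H (M0,N0,w0) = (M,N,w)" using Suc.prems s st_Suc by simp
  have g: "good H M0 N0 w0" using good_st[OF s] .
  have fin: "finite (M0 \<union> N0)" using g finU unfolding good_def by (meson finite_Un finite_subset)
  show ?case
  proof (cases rule: step_cases[of M0 N0 H w0])
    case stop then show ?thesis using st' by simp
  next
    case (goM x)
    then have "card (M0 \<union> N0) = k" using Suc.IH[OF s] by auto
    moreover have "x \<notin> M0 \<union> N0" using goM(1) by (auto simp: avail_def)
    ultimately show ?thesis using goM st' fin by auto
  next
    case (goN x)
    then have "card (M0 \<union> N0) = k" using Suc.IH[OF s] by auto
    moreover have "x \<notin> M0 \<union> N0" using goN(1) by (auto simp: avail_def)
    ultimately show ?thesis using goN st' fin by auto
  qed
qed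

lemma st_term: "st H (card U) = (M,N,w) \<Longrightarrow> avail U I M N = {}"
proof (rule ccontr)
  assume s: "st H (card U) = (M,N,w)" and ne: "avail U I M N \<noteq> {}"
  have "card (M \<union> N) = card U" using st_term_aux[OF s] ne by auto
  moreover have "M \<union> N \<subseteq> U" using good_st[OF s] unfolding good_def by auto
  ultimately have "M \<union> N = U" using finU card_subset_eq by blast
  then show False using ne by (auto simp: avail_def)
qed

lemma couple: assumes "e \<notin> H"
  shows "st H k = (M1,N1,w1) \<Longrightarrow> st (insert e H) k = (M2,N2,w2) \<Longrightarrow>
     ((M1,N1,w1) = (M2,N2,w2) \<and> e \<notin> M1 \<union> N1) \<or> (e \<in> N1 \<and> e \<in> M2 \<and> w1 e = w2 e)"
proof (induction k arbitrary: M1 N1 w1 M2 N2 w2)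
  case 0 then show ?case by (simp add: st_0)
next
  case (Suc k)
  obtain A1 B1 v1 where s1: "st H k = (A1,B1,v1)" by (cases "st H k") auto
  obtain A2 B2 v2 where s2: "st (insert e H) k = (A2,B2,v2)" by (cases "st (insert e H) k") auto
  have t1: "sim_step U I f sel H (A1,B1,v1) = (M1,N1,w1)" using Suc.prems s1 st_Suc by simp
  have t2: "sim_step U I f sel (insert e H) (A2,B2,v2) = (M2,N2,w2)" using Suc.prems s2 st_Suc by simp
  from Suc.IH[OF s1 s2] show ?case
  proof
    assume "(A1,B1,v1) = (A2,B2,v2) \<and> e \<notin> A1 \<union> B1"
    then have eq: "A2 = A1" "B2 = B1" "v2 = v1" and ne: "e \<notin> A1 \<union> B1" by auto
    show ?case
    proof (cases "avail U I A1 B1 = {}")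
      case True then show ?thesis using t1 t2 eq ne by (simp add: sim_step_def)
    next
      case False
      define x where "x = sel A1 B1 (best U I f A1 B1)"
      have r1: "(M1,N1,w1) = (if x \<in> H then (insert x A1, B1, v1(x := marg f A1 x))
               else (A1, insert x B1, v1(x := marg f A1 x)))"
        using t1 False unfolding sim_step_def Let_def x_def by simp
      have r2: "(M2,N2,w2) = (if x \<in> insert e H then (insert x A1, B1, v1(x := marg f A1 x))
               else (A1, insert x B1, v1(x := marg f A1 x)))"
        using t2 False eq unfolding sim_step_def Let_def x_def by simp
      show ?thesis
      proof (cases "x = e")
        case True then show ?thesis using r1 r2 assms by auto
      next
        case F: False then show ?thesis using r1 r2 ne by (auto split: if_splits)
      qed
    qed
  next
    assume a: "e \<in> B1 \<and> e \<in> A2 \<and> v1 e = v2 e"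
    note m1 = step_mono[OF t1] and m2 = step_mono[OF t2]
    show ?case using a m1 m2 by auto
  qed
qed

definition Bl where "Bl M N = {z \<in> U - (M \<union> N). \<not> I (insert z M)}"

lemma blk: assumes T: "I T"
  shows "st H k = (M,N,w) \<Longrightarrow> \<exists>\<phi>. inj_on \<phi> (T \<inter> Bl M N) \<and> \<phi> ` (T \<inter> Bl M N) \<subseteq> M
            \<and> (\<forall>z\<in>T \<inter> Bl M N. marg f M z \<le> w (\<phi> z))"
proof (induction k arbitrary: M N w)
  case 0
  have "T \<inter> Bl {} {} = {}" using I_down[OF T] by (auto simp: Bl_def)
  then show ?case using 0 by (simp add: st_0)
next
  case (Suc k)
  obtain M0 N0 w0 where s: "st H k = (M0,N0,w0)" by (cases "st H k") auto
  have st': "sim_step U I f sel H (M0,N0,w0) = (M,N,w)" using Suc.prems s st_Suc by simp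
  have g: "M0 \<subseteq> U" "N0 \<subseteq> U" "M0 \<inter> N0 = {}" "M0 \<subseteq> H" "N0 \<inter> H = {}" "I M0" "f M0 = sum w0 M0"
     "\<forall>z\<in>M0 \<union> N0. 0 \<le> w0 z" "\<forall>z\<in>N0. marg f M0 z \<le> w0 z"
     "\<forall>m\<in>M0. \<forall>z\<in>avail U I M0 N0. marg f M0 z \<le> w0 m"
    using good_st[OF s] by (auto simp: good_def)
  obtain \<phi> where phi: "inj_on \<phi> (T \<inter> Bl M0 N0)" "\<phi> ` (T \<inter> Bl M0 N0) \<subseteq> M0"
     "\<forall>z\<in>T \<inter> Bl M0 N0. marg f M0 z \<le> w0 (\<phi> z)" using Suc.IH[OF s] by blast
  have TU: "T \<subseteq> U" using I_sub T .
  have finT: "finite T" using TU finU finite_subset by blast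
  show ?case
  proof (cases rule: step_cases[of M0 N0 H w0])
    case stop then show ?thesis using st' phi by auto
  next
    case (goN x)
    have e: "M = M0" "N = insert x N0" "w = w0(x := marg f M0 x)" using goN st' by auto
    have xM: "x \<notin> M0" using goN(1) by (auto simp: avail_def)
    have sub: "T \<inter> Bl M N \<subseteq> T \<inter> Bl M0 N0" using e by (auto simp: Bl_def)
    have "\<forall>z\<in>T \<inter> Bl M N. marg f M z \<le> w (\<phi> z)"
    proof
      fix z assume z: "z \<in> T \<inter> Bl M N"
      then have "\<phi> z \<in> M0" using sub phi by auto
      then have "\<phi> z \<noteq> x" using xM by auto
      then show "marg f M z \<le> w (\<phi> z)" using phi sub z e by auto
    qed
    then show ?thesis using phi sub e inj_on_subset by (metis image_mono subset_trans)
  next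
    case (goM x)
    have e: "M = insert x M0" "N = N0" "w = w0(x := marg f M0 x)" using goM st' by auto
    have xM: "x \<notin> M0" "x \<in> U" "I (insert x M0)" using goM(1) by (auto simp: avail_def)
    define A where "A = T \<inter> Bl M N"
    define A1 where "A1 = A \<inter> Bl M0 N0"
    define A2 where "A2 = A - Bl M0 N0"
    have A2av: "A2 \<subseteq> avail U I M0 N0" unfolding A2_def A_def Bl_def avail_def e by auto
    have finA: "finite A" unfolding A_def using finT by auto
    have A1sub: "A1 \<subseteq> T \<inter> Bl M0 N0" unfolding A1_def A_def by auto
    have cardA: "card A \<le> card M"
    proof (rule I_aug)
      show "I M" using e xM by simp
      show "I A" using I_down[OF T] A_def by auto
      show "\<forall>y\<in>A. y \<notin> M \<and> \<not> I (insert y M)" unfolding A_def Bl_def by auto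
    qed
    have finM: "finite M" using e g finU finite_subset by (metis finite_insert)
    have injA1: "inj_on \<phi> A1" using phi(1) A1sub inj_on_subset by blast
    have imA1: "\<phi> ` A1 \<subseteq> M0" using phi(2) A1sub by blast
    have cA: "card A = card A1 + card A2"
      unfolding A1_def A2_def using finA by (metis card_Int_Diff)
    have "card (M - \<phi> ` A1) = card M - card A1"
    proof -
      have "\<phi> ` A1 \<subseteq> M" using imA1 e by auto
      then have "card (M - \<phi> ` A1) = card M - card (\<phi> ` A1)"
        using finM by (meson card_Diff_subset finite_subset)
      then show ?thesis using card_image[OF injA1] by simp
    qed
    then have "card A2 \<le> card (M - \<phi> ` A1)" using cA cardA by linarith
    then obtain \<psi> where psi: "\<psi> ` A2 \<subseteq> M - \<phi> ` A1" "inj_on \<psi> A2"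
      using card_le_inj[of A2 "M - \<phi> ` A1"] finA finM A2_def by auto
    define \<chi> where "\<chi> z = (if z \<in> A1 then \<phi> z else \<psi> z)" for z
    have AU: "A = A1 \<union> A2" "A1 \<inter> A2 = {}" unfolding A1_def A2_def by auto
    have inj: "inj_on \<chi> A"
      unfolding inj_on_def
    proof (intro ballI impI)
      fix a b assume a: "a \<in> A" and b: "b \<in> A" and ab: "\<chi> a = \<chi> b"
      show "a = b"
      proof (cases "a \<in> A1"; cases "b \<in> A1")
        assume "a \<in> A1" "b \<in> A1" then show ?thesis using ab injA1 \<chi>_def by (auto dest: inj_onD)
      next
        assume "a \<in> A1" "b \<notin> A1"
        then have "b \<in> A2" using b AU by auto
        then have "\<psi> b \<notin> \<phi> ` A1" using psi by auto
        then show ?thesis using ab \<chi>_def \<open>a \<in> A1\<close> \<open>b \<notin> A1\<close> by (metis imageI)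
      next
        assume "a \<notin> A1" "b \<in> A1"
        then have "a \<in> A2" using a AU by auto
        then have "\<psi> a \<notin> \<phi> ` A1" using psi by auto
        then show ?thesis using ab \<chi>_def \<open>a \<notin> A1\<close> \<open>b \<in> A1\<close> by (metis imageI)
      next
        assume "a \<notin> A1" "b \<notin> A1"
        then have "a \<in> A2" "b \<in> A2" using a b AU by auto
        then show ?thesis using ab \<chi>_def psi \<open>a \<notin> A1\<close> \<open>b \<notin> A1\<close> by (auto dest: inj_onD)
      qed
    qed
    have im: "\<chi> ` A \<subseteq> M" using imA1 psi e AU unfolding \<chi>_def by auto
    have val: "\<forall>z\<in>A. marg f M z \<le> w (\<chi> z)"
    proof
      fix z assume z: "z \<in> A"
      have zU: "z \<in> U" using z TU A_def by auto
      have dec: "marg f M z \<le> marg f M0 z" using marg_decr[of M0 M z] e g zU xM by auto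
      show "marg f M z \<le> w (\<chi> z)"
      proof (cases "z \<in> A1")
        case True
        then have "\<phi> z \<in> M0" using imA1 by auto
        then have "w (\<chi> z) = w0 (\<phi> z)" using True xM e \<chi>_def by auto
        moreover have "marg f M0 z \<le> w0 (\<phi> z)" using phi(3) A1sub True by auto
        ultimately show ?thesis using dec by auto
      next
        case False
        then have z2: "z \<in> A2" using z AU by auto
        then have zav: "z \<in> avail U I M0 N0" using A2av by auto
        have m: "\<chi> z \<in> M" using im z by auto
        have "marg f M0 z \<le> marg f M0 x" using goM(2) zav by auto
        also have "\<dots> \<le> w (\<chi> z)"
        proof (cases "\<chi> z = x")
          case True then show ?thesis using e by simp
        next
          case False
          then have "\<chi> z \<in> M0" using m e by auto
          then show ?thesis using g(10) goM(1) e False by auto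
        qed
        finally show ?thesis using dec by auto
      qed
    qed
    show ?thesis using inj im val A_def by blast
  qed
qed


lemma final_ineq: assumes T: "I T" and s: "st H (card U) = (M,N,w)"
  shows "f T \<le> 2 * sum w M + sum w N"
proof -
  have g: "M \<subseteq> U" "N \<subseteq> U" "M \<inter> N = {}" "I M" "f M = sum w M"
     "\<forall>z\<in>M \<union> N. 0 \<le> w z" "\<forall>z\<in>N. marg f M z \<le> w z"
    using good_st[OF s] by (auto simp: good_def)
  have av: "avail U I M N = {}" using st_term[OF s] .
  obtain \<phi> where phi: "inj_on \<phi> (T \<inter> Bl M N)" "\<phi> ` (T \<inter> Bl M N) \<subseteq> M"
     "\<forall>z\<in>T \<inter> Bl M N. marg f M z \<le> w (\<phi> z)" using blk[OF T s] by blast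
  have TU: "T \<subseteq> U" using I_sub T .
  have finU': "finite M" "finite N" "finite T" using g TU finU finite_subset by metis+
  have split: "T - M = (T \<inter> N) \<union> (T \<inter> Bl M N)" using av TU g(3) by (auto simp: avail_def Bl_def)
  have disj: "(T \<inter> N) \<inter> (T \<inter> Bl M N) = {}" by (auto simp: Bl_def)
  have "f T \<le> f (M \<union> T)" using mono TU g(1) unfolding monotone_fun_def by auto
  also have "\<dots> \<le> f M + (\<Sum>z\<in>T - M. marg f M z)" using submod_sum g(1) TU by auto
  also have "(\<Sum>z\<in>T - M. marg f M z) = (\<Sum>z\<in>T \<inter> N. marg f M z) + (\<Sum>z\<in>T \<inter> Bl M N. marg f M z)"
    unfolding split using disj finU' by (intro sum.union_disjoint) auto
  also have "(\<Sum>z\<in>T \<inter> N. marg f M z) \<le> (\<Sum>z\<in>T \<inter> N. w z)"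
    using g(7) by (intro sum_mono) auto
  also have "(\<Sum>z\<in>T \<inter> N. w z) \<le> sum w N"
    using g(6) finU' by (intro sum_mono2) auto
  also have "(\<Sum>z\<in>T \<inter> Bl M N. marg f M z) \<le> (\<Sum>z\<in>T \<inter> Bl M N. w (\<phi> z))"
    using phi(3) by (intro sum_mono) auto
  also have "(\<Sum>z\<in>T \<inter> Bl M N. w (\<phi> z)) = sum w (\<phi> ` (T \<inter> Bl M N))"
    using sum.reindex[OF phi(1), of w] by simp
  also have "\<dots> \<le> sum w M" using phi(2) g(6) finU' by (intro sum_mono2) auto
  finally show ?thesis using g(5) by linarith
qed

lemma st_final_good: "st H (card U) = (M,N,w) \<Longrightarrow> f M = sum w M \<and> M \<subseteq> H \<and> N \<inter> H = {} \<and> M \<subseteq> U \<and> N \<subseteq> U"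
  using good_st by (auto simp: good_def)

lemma sim_eq: "simulate U I f sel H = st H (card U)"
  by (simp add: simulate_def st_def)


lemma part2: assumes p: "0 < p" "p < 1"
  shows "expect U p (\<lambda>H. sum (sim_w U I f sel H) (sim_M U I f sel H))
       = p / (1 - p) * expect U p (\<lambda>H. sum (sim_w U I f sel H) (sim_N U I f sel H))"
proof -
  define MM where "MM H = sim_M U I f sel H" for H
  define NN where "NN H = sim_N U I f sel H" for H
  define W where "W H = sim_w U I f sel H" for H
  define wt where "wt H = p ^ card H * (1 - p) ^ (card U - card H)" for H :: "'a set"
  have stH: "st H (card U) = (MM H, NN H, W H)" for H
    unfolding MM_def NN_def W_def sim_M_def sim_N_def sim_w_def sim_eq by simp
  have MU: "MM H \<subseteq> U" "NN H \<subseteq> U" "MM H \<subseteq> H" "NN H \<inter> H = {}" for H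
    using st_final_good[OF stH] by auto
  have sumM: "sum (W H) (MM H) = (\<Sum>e\<in>U. if e \<in> MM H then W H e else 0)" for H
    using MU(1) finU by (simp add: sum.If_cases Int_absorb1)
  have sumN: "sum (W H) (NN H) = (\<Sum>e\<in>U. if e \<in> NN H then W H e else 0)" for H
    using MU(2) finU by (simp add: sum.If_cases Int_absorb1)
  have key: "(\<Sum>H\<in>Pow U. wt H * (if e \<in> MM H then W H e else 0))
      = p / (1 - p) * (\<Sum>H\<in>Pow U. wt H * (if e \<in> NN H then W H e else 0))" if e: "e \<in> U" for e
  proof -
    have "(\<Sum>H\<in>Pow U. wt H * (if e \<in> MM H then W H e else 0))
       = (\<Sum>H\<in>Pow (U - {e}). wt H * (if e \<in> MM H then W H e else 0)
            + wt (insert e H) * (if e \<in> MM (insert e H) then W (insert e H) e else 0))"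
      by (rule pow_split[OF finU e])
    also have "\<dots> = (\<Sum>H\<in>Pow (U - {e}). p / (1 - p) * (wt H * (if e \<in> NN H then W H e else 0)
            + wt (insert e H) * (if e \<in> NN (insert e H) then W (insert e H) e else 0)))"
    proof (rule sum.cong)
      fix H assume H: "H \<in> Pow (U - {e})"
      then have eH: "e \<notin> H" by auto
      have fH: "finite H" using H finU finite_subset by auto
      have c1: "card (insert e H) = Suc (card H)" using fH eH by simp
      have "card H \<le> card (U - {e})" using H finU by (intro card_mono) auto
      then have c2: "card H < card U" using e finU card_gt_0_iff[of U] by (auto simp: card_Diff_singleton)
      then have "card U - card H = Suc (card U - card (insert e H))" using c1 by auto
      then have wrel: "wt H = (1 - p) * (p ^ card H * (1 - p) ^ (card U - card (insert e H)))"
        unfolding wt_def by simp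
      have wrel2: "wt (insert e H) = p * (p ^ card H * (1 - p) ^ (card U - card (insert e H)))"
        unfolding wt_def c1 by simp
      have z1: "e \<notin> MM H" using MU(3)[of H] eH by auto
      have z2: "e \<notin> NN (insert e H)" using MU(4)[of "insert e H"] by auto
      have cp: "((MM H, NN H, W H) = (MM (insert e H), NN (insert e H), W (insert e H)) \<and> e \<notin> MM H \<union> NN H)
          \<or> (e \<in> NN H \<and> e \<in> MM (insert e H) \<and> W H e = W (insert e H) e)"
        using couple[OF eH stH stH] .
      have eq: "(if e \<in> MM (insert e H) then W (insert e H) e else 0) = (if e \<in> NN H then W H e else 0)"
        using cp by auto
      show "wt H * (if e \<in> MM H then W H e else 0)
            + wt (insert e H) * (if e \<in> MM (insert e H) then W (insert e H) e else 0)
          = p / (1 - p) * (wt H * (if e \<in> NN H then W H e else 0)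
            + wt (insert e H) * (if e \<in> NN (insert e H) then W (insert e H) e else 0))"
        unfolding eq wrel wrel2 using z1 z2 p by (simp add: field_simps)
    qed simp
    also have "\<dots> = p / (1 - p) * (\<Sum>H\<in>Pow U. wt H * (if e \<in> NN H then W H e else 0))"
      using pow_split[OF finU e, of "\<lambda>H. wt H * (if e \<in> NN H then W H e else 0)"]
      by (simp add: sum_distrib_left)
    finally show ?thesis .
  qed
  have "expect U p (\<lambda>H. sum (W H) (MM H)) = (\<Sum>e\<in>U. \<Sum>H\<in>Pow U. wt H * (if e \<in> MM H then W H e else 0))"
    unfolding expect_def wt_def[symmetric] sumM by (simp add: sum_distrib_left sum.swap[of _ U])
  also have "\<dots> = (\<Sum>e\<in>U. p / (1 - p) * (\<Sum>H\<in>Pow U. wt H * (if e \<in> NN H then W H e else 0)))"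
    using key by (intro sum.cong) auto
  also have "\<dots> = p / (1 - p) * expect U p (\<lambda>H. sum (W H) (NN H))"
    unfolding expect_def wt_def[symmetric] sumN by (simp add: sum_distrib_left sum.swap[of _ U])
  finally show ?thesis unfolding MM_def NN_def W_def .
qed


lemma part1: "expect U p (\<lambda>H. f (sim_M U I f sel H)) = expect U p (\<lambda>H. sum (sim_w U I f sel H) (sim_M U I f sel H))"
proof -
  have "f (sim_M U I f sel H) = sum (sim_w U I f sel H) (sim_M U I f sel H)" for H
    using st_final_good[of H "sim_M U I f sel H" "sim_N U I f sel H" "sim_w U I f sel H"]
    unfolding sim_M_def sim_N_def sim_w_def sim_eq by simp
  then show ?thesis by simp
qed

lemma part3: assumes p: "0 < p" "p < 1" and fnn: "\<forall>T. T \<subseteq> U \<longrightarrow> f T \<ge> 0"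
  shows "p / (1 - p) * expect U p (\<lambda>H. sum (sim_w U I f sel H) (sim_N U I f sel H))
           \<ge> p / 2 * Max (f ` {T. I T})"
proof -
  define MM where "MM H = sim_M U I f sel H" for H
  define NN where "NN H = sim_N U I f sel H" for H
  define W where "W H = sim_w U I f sel H" for H
  define wt where "wt H = p ^ card H * (1 - p) ^ (card U - card H)" for H :: "'a set"
  have stH: "st H (card U) = (MM H, NN H, W H)" for H
    unfolding MM_def NN_def W_def sim_M_def sim_N_def sim_w_def sim_eq by simp
  have finI: "finite {T. I T}" using I_sub finU by (metis Collect_mono Pow_def finite_Pow_iff rev_finite_subset)
  have "Max (f ` {T. I T}) \<in> f ` {T. I T}" using finI I_empty by (intro Max_in) auto
  then obtain T where T: "I T" "f T = Max (f ` {T. I T})" by auto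
  define OPT where "OPT = Max (f ` {T. I T})"
  have OPTnn: "0 \<le> OPT" using T fnn I_sub unfolding OPT_def by metis
  have wtnn: "0 \<le> wt H" for H using p unfolding wt_def by simp
  define c where "c = expect U p (\<lambda>H. sum (W H) (MM H))"
  define y where "y = expect U p (\<lambda>H. sum (W H) (NN H))"
  have cy: "c = p / (1 - p) * y" unfolding c_def y_def MM_def NN_def W_def using part2[OF p] .
  have ynn: "0 \<le> y"
  proof -
    have "0 \<le> sum (W H) (NN H)" for H
      using good_st[OF stH[of H]] by (intro sum_nonneg) (auto simp: good_def)
    then show ?thesis unfolding y_def expect_def wt_def[symmetric] using wtnn
      by (intro sum_nonneg) auto
  qed
  have "OPT = (\<Sum>H\<in>Pow U. wt H * OPT)" using wt_sum[OF finU, of p] unfolding wt_def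
    by (simp add: sum_distrib_right[symmetric])
  also have "\<dots> \<le> (\<Sum>H\<in>Pow U. wt H * (2 * sum (W H) (MM H) + sum (W H) (NN H)))"
  proof (rule sum_mono)
    fix H
    have "OPT \<le> 2 * sum (W H) (MM H) + sum (W H) (NN H)"
      using final_ineq[OF T(1) stH[of H]] T OPT_def by simp
    then show "wt H * OPT \<le> wt H * (2 * sum (W H) (MM H) + sum (W H) (NN H))"
      using wtnn by (intro mult_left_mono) auto
  qed
  also have "\<dots> = 2 * c + y" unfolding c_def y_def expect_def wt_def[symmetric]
    by (simp add: algebra_simps sum.distrib sum_distrib_left)
  finally have o: "OPT \<le> 2 * c + y" .
  have yc: "y * p = c * (1 - p)" using cy p by (simp add: field_simps)
  have cnn: "0 \<le> c" using cy ynn p by simp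
  have "p * OPT \<le> p * (2 * c + y)" using o p by (intro mult_left_mono) auto
  also have "\<dots> = c * (1 + p)" using yc by (simp add: algebra_simps)
  also have "\<dots> \<le> 2 * c"
  proof -
    have "c * p \<le> c" using cnn p by (intro mult_left_le) auto
    then show ?thesis by (simp add: algebra_simps)
  qed
  finally have "p * OPT \<le> 2 * c" .
  then show ?thesis unfolding OPT_def using cy[symmetric] by (simp add: y_def NN_def W_def)
qed

end

lemma lam_down: "finite U \<Longrightarrow> lam_indep U F mu T \<Longrightarrow> S \<subseteq> T \<Longrightarrow> lam_indep U F mu S"
  unfolding lam_indep_def
proof (intro conjI ballI)
  assume a: "finite U" "T \<subseteq> U \<and> (\<forall>B\<in>F. card (T \<inter> B) \<le> mu B)" "S \<subseteq> T"
  then show "S \<subseteq> U" by auto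
  fix B assume "B \<in> F"
  have "finite (T \<inter> B)" using a finite_subset by blast
  then have "card (S \<inter> B) \<le> card (T \<inter> B)" using a by (intro card_mono) auto
  then show "card (S \<inter> B) \<le> mu B" using a \<open>B \<in> F\<close> by auto
qed

lemma lam_aug:
  assumes finU: "finite U" and lam: "laminar U F"
    and X: "lam_indep U F mu X" and Y: "lam_indep U F mu Y"
    and H: "\<forall>y\<in>Y. y \<notin> X \<and> \<not> lam_indep U F mu (insert y X)"
  shows "card Y \<le> card X"
proof -
  have XU: "X \<subseteq> U" and YU: "Y \<subseteq> U" using X Y by (auto simp: lam_indep_def)
  have finX: "finite X" and finY: "finite Y" using XU YU finU finite_subset by auto
  have FU: "\<forall>B\<in>F. B \<subseteq> U" using lam by (auto simp: laminar_def)
  have finF: "finite F" using FU finU by (meson Pow_iff finite_Pow_iff finite_subset subsetI)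
  define Tt where "Tt = {B\<in>F. card (X \<inter> B) = mu B}"
  have finTt: "finite Tt" using finF Tt_def by auto
  have tight: "\<exists>B\<in>Tt. y \<in> B" if y: "y \<in> Y" for y
  proof -
    have yX: "y \<notin> X" "y \<in> U" using H y YU by auto
    have "insert y X \<subseteq> U" using yX XU by auto
    then obtain B where B: "B \<in> F" "\<not> card (insert y X \<inter> B) \<le> mu B"
      using H y unfolding lam_indep_def by auto
    have le: "card (X \<inter> B) \<le> mu B" using X B by (auto simp: lam_indep_def)
    have yB: "y \<in> B" using B le by (cases "y \<in> B") auto
    then have "insert y X \<inter> B = insert y (X \<inter> B)" by auto
    then have "card (insert y X \<inter> B) = Suc (card (X \<inter> B))" using finX yX by simp
    then have "card (X \<inter> B) = mu B" using B le by auto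
    then show ?thesis using B yB Tt_def by auto
  qed
  define Mx where "Mx = {B\<in>Tt. \<forall>B'\<in>Tt. B \<subseteq> B' \<longrightarrow> B' = B}"
  have finMx: "finite Mx" using finTt Mx_def by auto
  have cover: "\<exists>B\<in>Mx. y \<in> B" if y: "y \<in> Y" for y
  proof -
    define C where "C = {B\<in>Tt. y \<in> B}"
    have finC: "finite C" using finTt C_def by auto
    have neC: "C \<noteq> {}" using tight[OF y] C_def by auto
    have "Max (card ` C) \<in> card ` C" using finC neC by (intro Max_in) auto
    then obtain B where B: "B \<in> C" "card B = Max (card ` C)" by auto
    have "\<forall>B'\<in>Tt. B \<subseteq> B' \<longrightarrow> B' = B"
    proof (intro ballI impI)
      fix B' assume B': "B' \<in> Tt" "B \<subseteq> B'"
      then have "B' \<in> C" using B C_def by auto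
      then have "card B' \<le> card B" using B finC by auto
      moreover have "finite B'" using B' Tt_def FU finU finite_subset by blast
      ultimately show "B' = B" using B' card_subset_eq by (metis antisym card_mono)
    qed
    then show ?thesis using B C_def Mx_def by auto
  qed
  have disj: "\<forall>i\<in>Mx. \<forall>j\<in>Mx. i \<noteq> j \<longrightarrow> i \<inter> j = {}"
  proof (intro ballI impI)
    fix i j assume i: "i \<in> Mx" and j: "j \<in> Mx" and ij: "i \<noteq> j"
    have "i \<in> F" "j \<in> F" "i \<in> Tt" "j \<in> Tt" using i j Mx_def Tt_def by auto
    then have "i \<inter> j = {} \<or> i \<subseteq> j \<or> j \<subseteq> i" using lam unfolding laminar_def by blast
    then show "i \<inter> j = {}" using i j ij Mx_def by auto
  qed
  have Yeq: "Y = (\<Union>B\<in>Mx. Y \<inter> B)" using cover by auto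
  have "card Y = (\<Sum>B\<in>Mx. card (Y \<inter> B))"
    by (subst Yeq, rule card_UN_disjoint) (use finMx finY disj in auto)
  also have "\<dots> \<le> (\<Sum>B\<in>Mx. card (X \<inter> B))"
  proof (rule sum_mono)
    fix B assume "B \<in> Mx"
    then have "B \<in> F" "card (X \<inter> B) = mu B" using Mx_def Tt_def by auto
    then show "card (Y \<inter> B) \<le> card (X \<inter> B)" using Y by (auto simp: lam_indep_def)
  qed
  also have "\<dots> = card (\<Union>B\<in>Mx. X \<inter> B)"
    by (rule card_UN_disjoint[symmetric]) (use finMx finX disj in auto)
  also have "\<dots> \<le> card X" using finX by (intro card_mono) auto
  finally show ?thesis .
qed

theorem lemma2:
  fixes U :: "'a set" and F :: "'a set set" and mu :: "'a set \<Rightarrow> nat"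
    and f :: "'a set \<Rightarrow> real" and p :: real
    and sel :: "'a set \<Rightarrow> 'a set \<Rightarrow> 'a set \<Rightarrow> 'a"
  assumes "finite U"
    and "laminar U F"
    and "\<forall>T. T \<subseteq> U \<longrightarrow> f T \<ge> 0"
    and "f {} = 0"
    and "monotone_fun U f"
    and "submodular U f"
    and "0 < p" and "p < 1"
    and "\<forall>M N C. C \<noteq> {} \<longrightarrow> sel M N C \<in> C"
  shows "expect U p (\<lambda>H. f (sim_M U (lam_indep U F mu) f sel H))
           = expect U p (\<lambda>H. sum (sim_w U (lam_indep U F mu) f sel H) (sim_M U (lam_indep U F mu) f sel H))
       \<and> expect U p (\<lambda>H. sum (sim_w U (lam_indep U F mu) f sel H) (sim_M U (lam_indep U F mu) f sel H))
           = p / (1 - p) * expect U p (\<lambda>H. sum (sim_w U (lam_indep U F mu) f sel H) (sim_N U (lam_indep U F mu) f sel H))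
       \<and> p / (1 - p) * expect U p (\<lambda>H. sum (sim_w U (lam_indep U F mu) f sel H) (sim_N U (lam_indep U F mu) f sel H))
           \<ge> p / 2 * Max (f ` {T. lam_indep U F mu T})"
proof -
  interpret sim U "lam_indep U F mu" f sel
  proof
    show "finite U" by fact
    show "\<And>T. lam_indep U F mu T \<Longrightarrow> T \<subseteq> U" by (simp add: lam_indep_def)
    show "lam_indep U F mu {}" by (simp add: lam_indep_def)
    show "\<And>T S. lam_indep U F mu T \<Longrightarrow> S \<subseteq> T \<Longrightarrow> lam_indep U F mu S"
      using lam_down assms(1) by blast
    show "\<And>X Y. lam_indep U F mu X \<Longrightarrow> lam_indep U F mu Y \<Longrightarrow>
        \<forall>y\<in>Y. y \<notin> X \<and> \<not> lam_indep U F mu (insert y X) \<Longrightarrow> card Y \<le> card X"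
      using lam_aug assms(1,2) by blast
  qed (use assms in auto)
  show ?thesis using part1 part2[OF assms(7,8)] part3[OF assms(7,8,3)] by simp
qed

end
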